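(* Let $w_1,b_1,w_2,b_2$ be the four vertices, in cyclic order, of a face of $\overline G$, where $w_1,w_2$ are white and $b_1,b_2$ black, and set $w_3=w_1$. Then $$(-1)\prod_{i=1}^2\frac{\overline\partial(w_i,b_i)}{\overline\partial(b_i,w_{i+1})}>0.$$
   Context: $G=(V,E)$ is an infinite connected graph properly embedded in the hyperbolic plane (unit disk) with every face bounded and finite, with weights $\nu(e)>0$; $G^+=(V^+,E^+)$ is its dual with weights $\nu(f)>0$; $e^+$ denotes the dual of $e$. The embedding places each dual vertex inside its face, draws edges as Euclidean segments, and makes each pair $e,e^+$ perpendicular. $\overline G$ is the bipartite graph with black vertices $V\cup V^+$ and white vertices the crossing points $e\cap e^+$, a white vertex adjacent to the endpoints of $e$ and of $e^+$ (so faces of $\overline G$ are quadrilaterals). The matrix $\overline\partial$ on vertices of $\overline G$: $\overline\partial(u,v)=0$ if $u,v$ not adjacent; for adjacent white $w$ and black $b$, with $f$ the edge of $G$ or $G^+$ having $b$ as an endpoint and containing $w$, $\overline\partial(w,b)=\overline\partial(b,w)=\nu(f)\frac{b-w}{|b-w|}$ (points as complex numbers). *)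

theory Defs
  imports "HOL-Analysis.Analysis"
begin

text \<open>Points of the hyperbolic plane (Poincare unit disk model) are complex
numbers in ball 0 1. Since edges are drawn as Euclidean segments, an edge is the
2-element set of its endpoints; its drawing is the convex hull of that set.\<close>

definition drawing :: "complex set \<Rightarrow> complex set set \<Rightarrow> complex set" where
  "drawing V E = V \<union> \<Union> ((\<lambda>e. convex hull e) ` E)"

definition edge_interior :: "complex set \<Rightarrow> complex set" where
  "edge_interior e = convex hull e - e"

definition plane_straight :: "complex set \<Rightarrow> complex set set \<Rightarrow> bool" where
  "plane_straight V E \<longleftrightarrow>
     V \<subseteq> ball 0 1 \<and>
     (\<forall>e\<in>E. e \<subseteq> V \<and> card e = 2) \<and>
     (\<forall>e\<in>E. \<forall>e'\<in>E. e \<noteq> e' \<longrightarrow> convex hull e \<inter> convex hull e' = e \<inter> e') \<and>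
     (\<forall>v\<in>V. \<forall>e\<in>E. v \<in> convex hull e \<longrightarrow> v \<in> e) \<and>
     (\<forall>K. compact K \<and> K \<subseteq> ball 0 1 \<longrightarrow>
          finite {v\<in>V. v \<in> K} \<and> finite {e\<in>E. convex hull e \<inter> K \<noteq> {}})"

definition graph_connected :: "complex set \<Rightarrow> complex set set \<Rightarrow> bool" where
  "graph_connected V E \<longleftrightarrow> (\<forall>u\<in>V. \<forall>v\<in>V. (u, v) \<in> {(a, b). {a, b} \<in> E}\<^sup>*)"

definition faces :: "complex set \<Rightarrow> complex set set \<Rightarrow> complex set set" where
  "faces V E = components (ball 0 1 - drawing V E)"

text \<open>The standing setting: G = (V,E) with dual G+ = (Vp, dl ` E); fv maps each face of G
to its dual vertex, dl maps each edge e to its dual edge e+, nu are the weights.\<close>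
definition dual_setting ::
  "complex set \<Rightarrow> complex set set \<Rightarrow> complex set \<Rightarrow> (complex set \<Rightarrow> complex set)
    \<Rightarrow> (complex set \<Rightarrow> complex) \<Rightarrow> (complex set \<Rightarrow> real) \<Rightarrow> bool" where
  "dual_setting V E Vp dl fv nu \<longleftrightarrow>
     plane_straight V E \<and> infinite V \<and> graph_connected V E \<and>
     (\<forall>F\<in>faces V E. closure F \<subseteq> ball 0 1 \<and> finite {e\<in>E. convex hull e \<inter> closure F \<noteq> {}}) \<and>
     bij_betw fv (faces V E) Vp \<and> (\<forall>F\<in>faces V E. fv F \<in> F) \<and>
     inj_on dl E \<and>
     (\<forall>e\<in>E. dl e = fv ` {F\<in>faces V E. edge_interior e \<inter> closure F \<noteq> {}}) \<and>
     plane_straight Vp (dl ` E) \<and>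
     (\<forall>e\<in>E. \<exists>p. p \<in> edge_interior e \<and> p \<in> edge_interior (dl e) \<and>
                 convex hull e \<inter> drawing Vp (dl ` E) = {p} \<and>
                 convex hull (dl e) \<inter> drawing V E = {p}) \<and>
     (\<forall>e\<in>E. \<forall>a b c d. e = {a, b} \<longrightarrow> dl e = {c, d} \<longrightarrow> Re ((b - a) * cnj (d - c)) = 0) \<and>
     (\<forall>e\<in>E. nu e > 0 \<and> nu (dl e) > 0)"

text \<open>White vertices of G-bar: crossing points of e and e+.\<close>
definition whites :: "complex set set \<Rightarrow> (complex set \<Rightarrow> complex set) \<Rightarrow> complex set" where
  "whites E dl = {p. \<exists>e\<in>E. convex hull e \<inter> convex hull (dl e) = {p}}"

definition adj_wb :: "complex set set \<Rightarrow> (complex set \<Rightarrow> complex set) \<Rightarrow> complex \<Rightarrow> complex \<Rightarrow> bool" where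
  "adj_wb E dl w b \<longleftrightarrow> w \<in> whites E dl \<and>
     (\<exists>f\<in>E \<union> dl ` E. b \<in> f \<and> w \<in> convex hull f)"

definition edge_wb :: "complex set set \<Rightarrow> (complex set \<Rightarrow> complex set) \<Rightarrow> complex \<Rightarrow> complex \<Rightarrow> complex set" where
  "edge_wb E dl w b = (THE f. f \<in> E \<union> dl ` E \<and> b \<in> f \<and> w \<in> convex hull f)"

definition dbar :: "complex set set \<Rightarrow> (complex set \<Rightarrow> complex set) \<Rightarrow> (complex set \<Rightarrow> real)
    \<Rightarrow> complex \<Rightarrow> complex \<Rightarrow> complex" where
  "dbar E dl nu u v =
     (if adj_wb E dl u v then
        of_real (nu (edge_wb E dl u v)) * (v - u) / of_real (cmod (v - u))
      else if adj_wb E dl v u then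
        of_real (nu (edge_wb E dl v u)) * (u - v) / of_real (cmod (u - v))
      else 0)"

text \<open>Faces of G-bar: its drawing is the union of the drawings of G and G+.\<close>
definition gbar_faces :: "complex set \<Rightarrow> complex set set \<Rightarrow> complex set \<Rightarrow> (complex set \<Rightarrow> complex set) \<Rightarrow> complex set set" where
  "gbar_faces V E Vp dl = components (ball 0 1 - (drawing V E \<union> drawing Vp (dl ` E)))"

end

theory Submission
  imports Defs "HOL-Analysis.Analysis"
begin


definition orient :: "complex \<Rightarrow> complex \<Rightarrow> complex \<Rightarrow> real" where
  "orient a b c = Im (cnj (b - a) * (c - a))"

lemma orient_ident:
  "of_real (orient r s p) * q - of_real (orient r s q) * p
   = of_real (orient p q s) * r - of_real (orient p q r) * s"
  by (simp add: orient_def complex_eq_iff algebra_simps)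

lemma orient_diff: "orient r s p - orient r s q = - (orient p q r - orient p q s)"
  by (simp add: orient_def algebra_simps)

lemma aux_div: "(a * r - b * s) / (X::complex) = (a / X) * r + (- b / X) * s"
  by (simp add: diff_divide_distrib)

lemma seg_cross:
  assumes C: "orient p q r > 0" and D: "orient p q s < 0"
    and A: "orient r s p < 0" and B: "orient r s q > 0"
  shows "closed_segment p q \<inter> closed_segment r s \<noteq> {}"
proof -
  define a where "a = orient r s p"
  define b where "b = orient r s q"
  define c where "c = orient p q r"
  define d where "d = orient p q s"
  define l where "l = a / (a - b)"
  define m where "m = c / (c - d)"
  have l01: "0 \<le> l" "l \<le> 1" using A B unfolding l_def a_def b_def by (auto simp: divide_simps)
  have m01: "0 \<le> m" "m \<le> 1" using C D unfolding m_def c_def d_def by (auto simp: divide_simps)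
  have id: "of_real a * q - of_real b * p = of_real d * r - of_real c * s"
    unfolding a_def b_def c_def d_def by (rule orient_ident)
  have ab: "a - b = d - c" using orient_diff[of r s p q] unfolding a_def b_def c_def d_def by simp
  have nz: "a - b \<noteq> 0" using A B unfolding a_def b_def by simp
  have "(1 - l) *\<^sub>R p + l *\<^sub>R q = (1 - m) *\<^sub>R r + m *\<^sub>R s"
  proof -
    have e1: "(1 - l) = - b / (a - b)" using nz by (simp add: l_def field_simps)
    have e2: "(1 - m) = d / (d - c)" using nz ab by (simp add: m_def field_simps)
    have e3: "m = - c / (d - c)" using nz ab by (simp add: m_def field_simps)
    have "(1 - l) *\<^sub>R p + l *\<^sub>R q = (of_real a * q - of_real b * p) / of_real (a - b)"
      unfolding e1 by (simp add: l_def scaleR_conv_of_real diff_divide_distrib add_divide_distrib mult.commute)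
    also have "\<dots> = (of_real d * r - of_real c * s) / of_real (d - c)" using id ab by simp
    also have "\<dots> = of_real (d / (d - c)) * r + of_real (- c / (d - c)) * s"
    proof -
      show ?thesis unfolding of_real_divide of_real_minus by (rule aux_div)
    qed
    also have "\<dots> = (1 - m) *\<^sub>R r + m *\<^sub>R s"
      by (simp only: scaleR_conv_of_real e2[symmetric] e3[symmetric])
    finally show ?thesis .
  qed
  moreover have "(1 - l) *\<^sub>R p + l *\<^sub>R q \<in> closed_segment p q"
    using l01 by (auto simp: in_segment)
  moreover have "(1 - m) *\<^sub>R r + m *\<^sub>R s \<in> closed_segment r s"
    using m01 by (auto simp: in_segment)
  ultimately show ?thesis by auto
qed



lemma ineq1:
  fixes x1 y1 x2 y2 :: real
  assumes "y1 > 0" "y2 > 0" "x1^2 + y1^2 = 1" "x2^2 + y2^2 = 1" "x1 > x2"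
  shows "(x1 + 1) * y2 > y1 * (x2 + 1)" "y1 * (1 - x2) > y2 * (1 - x1)"
proof -
  have b1: "-1 < x1" "x1 < 1" "-1 < x2" "x2 < 1"
    using assms by (smt (verit) power2_le_imp_le power2_less_imp_less one_power2 zero_less_power2 power2_minus)+
  have "((x1 + 1) * y2)^2 - (y1 * (x2 + 1))^2 = (x1+1)*(x2+1)*(2*x1 - 2*x2)"
    using assms(3,4) by algebra
  moreover have "(x1+1)*(x2+1)*(2*x1 - 2*x2) > 0" using b1 assms by simp
  ultimately have "(y1 * (x2 + 1))^2 < ((x1 + 1) * y2)^2" by simp
  then show "(x1 + 1) * y2 > y1 * (x2 + 1)"
    by (rule power2_less_imp_less) (use b1 assms in simp)
  have "(y1 * (1 - x2))^2 - (y2 * (1 - x1))^2 = (1-x1)*(1-x2)*(2*x1 - 2*x2)"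
    using assms(3,4) by algebra
  moreover have "(1-x1)*(1-x2)*(2*x1 - 2*x2) > 0" using b1 assms by simp
  ultimately have "(y2 * (1 - x1))^2 < (y1 * (1 - x2))^2" by simp
  then show "y1 * (1 - x2) > y2 * (1 - x1)"
    by (rule power2_less_imp_less) (use b1 assms in simp)
qed

lemma circle_cross:
  fixes u v :: complex
  assumes "cmod u = 1" "cmod v = 1" "Im u * Im v > 0" "Re u > Re v"
  shows "closed_segment (-1) u \<inter> closed_segment v 1 \<noteq> {}"
proof -
  have cu: "(Re u)^2 + (Im u)^2 = 1" "(Re v)^2 + (Im v)^2 = 1"
    using assms(1,2) cmod_power2[of u] cmod_power2[of v] by auto
  consider "Im u > 0" "Im v > 0" | "Im u < 0" "Im v < 0"
    using assms(3) by (metis mult_less_0_iff not_less_iff_gr_or_eq mult_eq_0_iff less_irrefl)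
  then show ?thesis
  proof cases
    case 1
    note i = ineq1[of "Im u" "Im v" "Re u" "Re v", OF 1 cu assms(4)]
    show ?thesis
      by (rule seg_cross) (use i 1 in \<open>auto simp: orient_def algebra_simps\<close>)
  next
    case 2
    have 3: "- Im u > 0" "- Im v > 0" using 2 by auto
    note i = ineq1[of "- Im u" "- Im v" "Re u" "Re v", OF 3 _ _ assms(4)]
    have i': "(Re u + 1) * - Im v > - Im u * (Re v + 1)" "- Im u * (1 - Re v) > - Im v * (1 - Re u)"
      using i cu by auto
    have "closed_segment (-1) u \<inter> closed_segment 1 v \<noteq> {}"
      by (rule seg_cross) (use i' 2 in \<open>auto simp: orient_def algebra_simps\<close>)
    then show ?thesis by (simp add: closed_segment_commute)
  qed
qed





lemma im_nz:
  fixes w :: complex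
  assumes "cmod w = 1" "w \<noteq> 1" "w \<noteq> -1"
  shows "Im w \<noteq> 0"
proof
  assume h: "Im w = 0"
  then have "(Re w)^2 = 1" using assms(1) cmod_power2[of w] by simp
  then have "Re w = 1 \<or> Re w = -1" by (simp add: power2_eq_1_iff)
  then show False using h assms(2,3) by (auto simp: complex_eq_iff)
qed

lemma norm_core:
  fixes w1 w2 :: complex
  assumes "cmod w1 = 1" "cmod w2 = 1" "w1 \<noteq> w2" "Im w1 \<noteq> 0" "Im w2 \<noteq> 0"
    and "closed_segment (-1) w2 \<inter> closed_segment w1 1 = {}"
    and "closed_segment (-1) w1 \<inter> closed_segment w2 1 = {}"
  shows "Im w1 * Im w2 < 0"
proof (rule ccontr)
  assume "\<not> Im w1 * Im w2 < 0"
  moreover have "Im w1 * Im w2 \<noteq> 0" using assms(4,5) by simp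
  ultimately have pos: "Im w1 * Im w2 > 0" by linarith
  have cu: "(Re w1)^2 + (Im w1)^2 = 1" "(Re w2)^2 + (Im w2)^2 = 1"
    using assms(1,2) cmod_power2[of w1] cmod_power2[of w2] by auto
  have "Re w1 \<noteq> Re w2"
  proof
    assume e: "Re w1 = Re w2"
    then have "(Im w1)^2 = (Im w2)^2" using cu by simp
    then have "Im w1 = Im w2 \<or> Im w1 = - Im w2" by (simp add: power2_eq_iff)
    moreover have "Im w1 \<noteq> - Im w2"
    proof
      assume "Im w1 = - Im w2"
      then have "Im w1 * Im w2 = - (Im w2 * Im w2)" by simp
      then show False using pos zero_le_square[of "Im w2"] by linarith
    qed
    ultimately have "Im w1 = Im w2" by blast
    then show False using e assms(3) by (simp add: complex_eq_iff)
  qed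
  then consider "Re w1 > Re w2" | "Re w2 > Re w1" by linarith
  then show False
  proof cases
    case 1
    show False using circle_cross[OF assms(1,2) pos 1] assms(7) by contradiction
  next
    case 2
    have pos': "Im w2 * Im w1 > 0" using pos by (simp add: mult.commute)
    show False using circle_cross[OF assms(2,1) pos' 2] assms(6) by contradiction
  qed
qed

lemma norm_ratio:
  fixes w1 w2 :: complex
  assumes "cmod w1 = 1" "cmod w2 = 1" "w1 \<noteq> 1" "w2 \<noteq> 1" "w1 \<noteq> -1" "w2 \<noteq> -1"
    and "Im w1 * Im w2 < 0"
  shows "Im ((-1 - w1) * (1 - w2) / ((-1 - w2) * (1 - w1))) = 0 \<and>
         Re ((-1 - w1) * (1 - w2) / ((-1 - w2) * (1 - w1))) < 0"
proof -
  define a where "a = (-1 - w1) * (1 - w2)"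
  define b where "b = (-1 - w2) * (1 - w1)"
  have cu: "(Re w1)^2 + (Im w1)^2 = 1" "(Re w2)^2 + (Im w2)^2 = 1"
    using assms(1,2) cmod_power2[of w1] cmod_power2[of w2] by auto
  have ab: "a * cnj b = of_real (4 * Im w1 * Im w2)"
  proof -
    have "Re (a * cnj b) = 4 * Im w1 * Im w2"
      unfolding a_def b_def using cu by simp algebra
    moreover have "Im (a * cnj b) = 0"
      unfolding a_def b_def using cu by simp algebra
    ultimately show ?thesis by (simp add: complex_eq_iff)
  qed
  have "b \<noteq> 0" using assms unfolding b_def by (auto simp: add_eq_0_iff)
  then have nb: "(cmod b)^2 > 0" by simp
  have q: "a / b = of_real (4 * Im w1 * Im w2 / (cmod b)^2)"
    unfolding complex_div_cnj[of a b] ab by simp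
  have neg: "4 * Im w1 * Im w2 / (cmod b)^2 < 0" using assms(7) nb by (simp add: divide_neg_pos)
  show ?thesis using neg unfolding a_def[symmetric] b_def[symmetric] q Re_complex_of_real Im_complex_of_real
    by simp
qed



lemma perp_norm:
  fixes b1 b2 w :: complex
  assumes "Re ((b1 - w) * cnj (b2 - w)) = 0"
  shows "cmod (2 * w - b1 - b2) = cmod (b2 - b1)"
proof -
  have "(cmod (2 * w - b1 - b2))^2 = (cmod (b2 - b1))^2"
    using assms unfolding cmod_power2 by simp algebra
  then show ?thesis by (simp add: power2_eq_iff_nonneg)
qed

lemma aff_comb:
  fixes aa bb p q :: complex
  shows "aa * ((1 - u) *\<^sub>R p + u *\<^sub>R q) + bb = (1 - u) *\<^sub>R (aa * p + bb) + u *\<^sub>R (aa * q + bb)"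
  by (simp add: scaleR_conv_of_real algebra_simps)

lemma seg_back:
  fixes aa bb p q X :: complex
  assumes "X \<in> closed_segment p q"
  shows "aa * X + bb \<in> closed_segment (aa * p + bb) (aa * q + bb)"
proof -
  obtain u where u: "0 \<le> u" "u \<le> 1" "X = (1 - u) *\<^sub>R p + u *\<^sub>R q" using assms by (auto simp: in_segment)
  show ?thesis unfolding u(3) aff_comb using u(1,2) by (auto simp: in_segment)
qed

lemma ratio_scale:
  fixes c x y z t :: complex
  assumes "c \<noteq> 0"
  shows "(2*x/c)*(2*y/c)/((2*z/c)*(2*t/c)) = x*y/(z*t)"
proof -
  have k: "4 / c^2 \<noteq> 0" using assms by simp
  have "(2*x/c)*(2*y/c) = (4/c^2) * (x*y)" "(2*z/c)*(2*t/c) = (4/c^2) * (z*t)"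
    by (simp_all add: power2_eq_square)
  then have "(2*x/c)*(2*y/c)/((2*z/c)*(2*t/c)) = ((4/c^2) * (x*y)) / ((4/c^2) * (z*t))"
    by (simp only:)
  also have "\<dots> = x*y/(z*t)" by (rule mult_divide_mult_cancel_left[OF k])
  finally show ?thesis .
qed

lemma geo_main:
  fixes b1 b2 w1 w2 :: complex
  assumes "b1 \<noteq> b2" "w1 \<noteq> w2" "w1 \<noteq> b1" "w1 \<noteq> b2" "w2 \<noteq> b1" "w2 \<noteq> b2"
    and p1: "Re ((b1 - w1) * cnj (b2 - w1)) = 0" and p2: "Re ((b1 - w2) * cnj (b2 - w2)) = 0"
    and d1: "closed_segment b1 w2 \<inter> closed_segment w1 b2 = {}"
    and d2: "closed_segment b1 w1 \<inter> closed_segment w2 b2 = {}"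
  shows "Im ((b1 - w1) * (b2 - w2) / ((b1 - w2) * (b2 - w1))) = 0 \<and>
         Re ((b1 - w1) * (b2 - w2) / ((b1 - w2) * (b2 - w1))) < 0"
proof -
  define c where "c = b2 - b1"
  have c0: "c \<noteq> 0" using assms(1) by (simp add: c_def)
  define f where "f = (\<lambda>z. (2 * z - b1 - b2) / c)"
  define aa where "aa = c / 2"
  define bb where "bb = (b1 + b2) / 2"
  have bk: "aa * f z + bb = z" for z using c0 by (simp add: f_def aa_def bb_def field_simps)
  have fb1: "f b1 = -1" and fb2: "f b2 = 1" using c0 by (simp_all add: f_def c_def field_simps)
  have finj: "f x = f y \<Longrightarrow> x = y" for x y by (metis bk)
  have n1: "cmod (f w1) = 1" using perp_norm[OF p1] c0 by (simp add: f_def norm_divide c_def)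
  have n2: "cmod (f w2) = 1" using perp_norm[OF p2] c0 by (simp add: f_def norm_divide c_def)
  have ne: "f w1 \<noteq> 1" "f w2 \<noteq> 1" "f w1 \<noteq> -1" "f w2 \<noteq> -1" "f w1 \<noteq> f w2"
    using finj[of w1 b2] finj[of w2 b2] finj[of w1 b1] finj[of w2 b1] finj[of w1 w2] assms(2-6)
    unfolding fb1 fb2 by auto
  have s1: "closed_segment (-1) (f w2) \<inter> closed_segment (f w1) 1 = {}"
  proof (rule ccontr)
    assume "closed_segment (-1) (f w2) \<inter> closed_segment (f w1) 1 \<noteq> {}"
    then obtain X where X: "X \<in> closed_segment (f b1) (f w2)" "X \<in> closed_segment (f w1) (f b2)"
      unfolding fb1 fb2 by auto
    from seg_back[OF X(1), of aa bb] seg_back[OF X(2), of aa bb] d1 show False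
      unfolding bk by blast
  qed
  have s2: "closed_segment (-1) (f w1) \<inter> closed_segment (f w2) 1 = {}"
  proof (rule ccontr)
    assume "closed_segment (-1) (f w1) \<inter> closed_segment (f w2) 1 \<noteq> {}"
    then obtain X where X: "X \<in> closed_segment (f b1) (f w1)" "X \<in> closed_segment (f w2) (f b2)"
      unfolding fb1 fb2 by auto
    from seg_back[OF X(1), of aa bb] seg_back[OF X(2), of aa bb] d2 show False
      unfolding bk by blast
  qed
  have core: "Im (f w1) * Im (f w2) < 0"
    by (rule norm_core[OF n1 n2 ne(5) im_nz[OF n1 ne(1,3)] im_nz[OF n2 ne(2,4)] s1 s2])
  note r = norm_ratio[OF n1 n2 ne(1-4) core]
  have m: "-1 - f w = 2 * (b1 - w) / c" "1 - f w = 2 * (b2 - w) / c" for w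
    using c0 by (simp_all add: f_def c_def field_simps)
  have eq: "(-1 - f w1) * (1 - f w2) / ((-1 - f w2) * (1 - f w1)) = (b1 - w1) * (b2 - w2) / ((b1 - w2) * (b2 - w1))"
    unfolding m by (rule ratio_scale[OF c0])
  show ?thesis using r unfolding eq .
qed



lemma scal_neg:
  fixes R :: complex
  assumes "K > 0" "Im R = 0" "Re R < 0"
  shows "Im (- (of_real K * R)) = 0 \<and> Re (- (of_real K * R)) > 0"
  using assms by (simp add: mult_pos_neg)

lemma final_alg:
  fixes b1 b2 w1 w2 :: complex and n11 n21 n22 n12 :: real
  assumes "n11 > 0" "n21 > 0" "n22 > 0" "n12 > 0"
    and "b1 \<noteq> w1" "b1 \<noteq> w2" "b2 \<noteq> w1" "b2 \<noteq> w2"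
    and R: "Im ((b1 - w1) * (b2 - w2) / ((b1 - w2) * (b2 - w1))) = 0"
       "Re ((b1 - w1) * (b2 - w2) / ((b1 - w2) * (b2 - w1))) < 0"
  shows "let z = - ((of_real n11 * (b1 - w1) / of_real (cmod (b1 - w1))) /
                    (of_real n21 * (b1 - w2) / of_real (cmod (b1 - w2))) *
                    ((of_real n22 * (b2 - w2) / of_real (cmod (b2 - w2))) /
                    (of_real n12 * (b2 - w1) / of_real (cmod (b2 - w1)))))
         in Im z = 0 \<and> Re z > 0"
proof -
  define K where "K = n11 * n22 * cmod (b1 - w2) * cmod (b2 - w1) / (n21 * n12 * cmod (b1 - w1) * cmod (b2 - w2))"
  have K: "K > 0" using assms(1-8) unfolding K_def by simp
  have nz: "b1 - w1 \<noteq> 0" "b1 - w2 \<noteq> 0" "b2 - w1 \<noteq> 0" "b2 - w2 \<noteq> 0" using assms(5-8) by auto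
  have e: "(of_real n11 * (b1 - w1) / of_real (cmod (b1 - w1))) /
                    (of_real n21 * (b1 - w2) / of_real (cmod (b1 - w2))) *
                    ((of_real n22 * (b2 - w2) / of_real (cmod (b2 - w2))) /
                    (of_real n12 * (b2 - w1) / of_real (cmod (b2 - w1))))
        = of_real K * ((b1 - w1) * (b2 - w2) / ((b1 - w2) * (b2 - w1)))"
    using nz assms(1-4) unfolding K_def by (simp add: field_simps)
  show ?thesis unfolding Let_def e by (rule scal_neg[OF K R])
qed




lemma inv_neg:
  fixes z :: complex
  assumes "Im z = 0 \<and> Re z < 0"
  shows "Im (inverse z) = 0 \<and> Re (inverse z) < 0"
  using assms by (simp add: divide_neg_pos)

lemma inv_conv:
  fixes b1 b2 w1 w2 :: complex
  assumes "Im ((b2 - w1) * (b1 - w2) / ((b2 - w2) * (b1 - w1))) = 0 \<and>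
         Re ((b2 - w1) * (b1 - w2) / ((b2 - w2) * (b1 - w1))) < 0"
  shows "Im ((b1 - w1) * (b2 - w2) / ((b1 - w2) * (b2 - w1))) = 0 \<and>
         Re ((b1 - w1) * (b2 - w2) / ((b1 - w2) * (b2 - w1))) < 0"
proof -
  have "(b1 - w1) * (b2 - w2) / ((b1 - w2) * (b2 - w1)) = inverse ((b2 - w1) * (b1 - w2) / ((b2 - w2) * (b1 - w1)))"
    by (simp add: inverse_divide ac_simps)
  then show ?thesis using inv_neg[OF assms] by simp
qed

theorem lemma2p5:
  fixes V Vp :: "complex set" and E :: "complex set set"
    and dl :: "complex set \<Rightarrow> complex set" and fv :: "complex set \<Rightarrow> complex"
    and nu :: "complex set \<Rightarrow> real" and w1 b1 w2 b2 :: complex and Q :: "complex set"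
  assumes "dual_setting V E Vp dl fv nu"
    and "Q \<in> gbar_faces V E Vp dl"
    and "w1 \<in> whites E dl" "w2 \<in> whites E dl"
    and "b1 \<in> V \<union> Vp" "b2 \<in> V \<union> Vp"
    and "w1 \<noteq> w2" "b1 \<noteq> b2"
    and "adj_wb E dl w1 b1" "adj_wb E dl w2 b1" "adj_wb E dl w2 b2" "adj_wb E dl w1 b2"
    and "frontier Q = closed_segment w1 b1 \<union> closed_segment b1 w2 \<union>
                      closed_segment w2 b2 \<union> closed_segment b2 w1"
  shows "let z = - ((dbar E dl nu w1 b1 / dbar E dl nu b1 w2) *
                    (dbar E dl nu w2 b2 / dbar E dl nu b2 w1))
         in Im z = 0 \<and> Re z > 0"
proof -
  note ds = assms(1)[unfolded dual_setting_def]
  have PS1: "plane_straight V E" using ds by (elim conjE) assumption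
  have PS2: "plane_straight Vp (dl ` E)" using ds by (elim conjE) assumption
  have bij: "bij_betw fv (faces V E) Vp" using ds by (elim conjE) assumption
  have fvin: "\<forall>F\<in>faces V E. fv F \<in> F" using ds by (elim conjE) assumption
  have injdl: "inj_on dl E" using ds by (elim conjE) assumption
  have cross: "\<forall>e\<in>E. \<exists>p. p \<in> edge_interior e \<and> p \<in> edge_interior (dl e) \<and>
                 convex hull e \<inter> drawing Vp (dl ` E) = {p} \<and>
                 convex hull (dl e) \<inter> drawing V E = {p}" using ds by (elim conjE) assumption
  have perp: "\<forall>e\<in>E. \<forall>a b c d. e = {a, b} \<longrightarrow> dl e = {c, d} \<longrightarrow> Re ((b - a) * cnj (d - c)) = 0"
    using ds by (elim conjE) assumption
  have nupos: "\<forall>e\<in>E. nu e > 0 \<and> nu (dl e) > 0" using ds by (elim conjE) assumption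
  have E2: "\<forall>e\<in>E. e \<subseteq> V \<and> card e = 2"
    using PS1 unfolding plane_straight_def by (elim conjE) assumption
  have Eint: "\<forall>e\<in>E. \<forall>e'\<in>E. e \<noteq> e' \<longrightarrow> convex hull e \<inter> convex hull e' = e \<inter> e'"
    using PS1 unfolding plane_straight_def by (elim conjE) assumption
  have Evert: "\<forall>v\<in>V. \<forall>e\<in>E. v \<in> convex hull e \<longrightarrow> v \<in> e"
    using PS1 unfolding plane_straight_def by (elim conjE) assumption
  have D2: "\<forall>e\<in>E. dl e \<subseteq> Vp \<and> card (dl e) = 2"
    using PS2 unfolding plane_straight_def by (elim conjE) auto
  have Dvert: "\<forall>v\<in>Vp. \<forall>e\<in>E. v \<in> convex hull (dl e) \<longrightarrow> v \<in> dl e"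
    using PS2 unfolding plane_straight_def by (elim conjE) auto
  have disj: "V \<inter> Vp = {}"
  proof -
    have "v \<notin> V" if vP: "v \<in> Vp" for v
    proof -
      obtain F where F: "F \<in> faces V E" "v = fv F" using bij vP unfolding bij_betw_def by blast
      have "F \<subseteq> ball 0 1 - drawing V E" using F(1) unfolding faces_def by (rule in_components_subset)
      moreover have "v \<in> F" using F fvin by blast
      ultimately show ?thesis unfolding drawing_def by blast
    qed
    then show ?thesis by blast
  qed
  have hdraw: "convex hull e \<subseteq> drawing V E" if hyp: "e \<in> E" for e
    using hyp unfolding drawing_def by blast
  have inh: "x \<in> convex hull e" if hyp: "x \<in> e" for x e
    using hyp hull_subset[of e convex] by (rule subsetD[rotated])
  obtain pc where pc: "\<forall>e\<in>E. pc e \<in> edge_interior e \<and> pc e \<in> edge_interior (dl e) \<and>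
                 convex hull e \<inter> drawing Vp (dl ` E) = {pc e} \<and>
                 convex hull (dl e) \<inter> drawing V E = {pc e}"
    using bchoice[OF cross] by (elim exE) (rule that)
  have pch: "pc e \<in> convex hull e" "pc e \<notin> e" "pc e \<in> convex hull (dl e)" "pc e \<notin> dl e"
    "convex hull (dl e) \<inter> drawing V E = {pc e}" if hyp: "e \<in> E" for e
    using pc hyp unfolding edge_interior_def by blast+
  have white: "\<exists>e\<in>E. w = pc e" if hyp: "w \<in> whites E dl" for w
  proof -
    obtain e where e: "e \<in> E" "convex hull e \<inter> convex hull (dl e) = {w}"
      using hyp unfolding whites_def by blast
    have "pc e \<in> {w}" using pch(1,3)[OF e(1)] e(2) by (metis IntI)
    then show ?thesis using e(1) by auto
  qed
  have L1: "f = e" if hyp: "e \<in> E" "f \<in> E" "pc e \<in> convex hull f" for e f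
    using Eint pch(1,2)[OF hyp(1)] hyp by blast
  have L2: "e' = e" if hyp: "e \<in> E" "e' \<in> E" "pc e \<in> convex hull (dl e')" for e e'
  proof -
    have "pc e \<in> drawing V E" using hdraw[OF hyp(1)] pch(1)[OF hyp(1)] by blast
    then have "pc e = pc e'" using pch(5)[OF hyp(2)] hyp(3) by blast
    then show ?thesis using L1[OF hyp(2,1)] pch(1)[OF hyp(1)] by metis
  qed
  have adjE: "b \<in> e \<or> b \<in> dl e" if hyp: "e \<in> E" "adj_wb E dl (pc e) b" for e b
  proof -
    obtain f where f: "f \<in> E \<union> dl ` E" "b \<in> f" "pc e \<in> convex hull f"
      using hyp(2) unfolding adj_wb_def by blast
    show ?thesis
    proof (cases "f \<in> E")
      case True
      then show ?thesis using L1[OF hyp(1) True f(3)] f(2) by simp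
    next
      case False
      then obtain e' where "e' \<in> E" "f = dl e'" using f(1) by blast
      then show ?thesis using L2[OF hyp(1)] f by blast
    qed
  qed
  have inV: "b \<in> V" if hyp: "e \<in> E" "b \<in> e" for e b using E2 hyp by blast
  have inVp: "b \<in> Vp" if hyp: "e \<in> E" "b \<in> dl e" for e b using D2 hyp by blast
  have notwhite: "b \<notin> whites E dl" if hyp: "b \<in> V \<union> Vp" for b
  proof
    assume "b \<in> whites E dl"
    then obtain e where e: "e \<in> E" "b = pc e" using white by blast
    show False
    proof (cases "b \<in> V")
      case True
      then show False using Evert e pch(1,2)[OF e(1)] by blast
    next
      case False
      then have "b \<in> Vp" using hyp by blast
      then show False using Dvert e pch(3,4)[OF e(1)] by blast
    qed
  qed
  have ewb: "edge_wb E dl (pc e) b = f" if hyp: "e \<in> E" "f = e \<or> f = dl e" "b \<in> f" for e f b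
    unfolding edge_wb_def
  proof (rule the_equality)
    show "f \<in> E \<union> dl ` E \<and> b \<in> f \<and> pc e \<in> convex hull f"
      using hyp pch(1,3)[OF hyp(1)] by blast
  next
    fix g assume g: "g \<in> E \<union> dl ` E \<and> b \<in> g \<and> pc e \<in> convex hull g"
    have "g = e \<or> g = dl e"
    proof (cases "g \<in> E")
      case True
      then show ?thesis using L1[OF hyp(1) True] g by simp
    next
      case False
      then obtain e' where "e' \<in> E" "g = dl e'" using g by blast
      then show ?thesis using L2[OF hyp(1)] g by blast
    qed
    then show "g = f" using hyp g disj inV[OF hyp(1)] inVp[OF hyp(1)] by blast
  qed
  have dbv: "dbar E dl nu (pc e) b = of_real (nu f) * (b - pc e) / of_real (cmod (b - pc e)) \<and>
             dbar E dl nu b (pc e) = of_real (nu f) * (b - pc e) / of_real (cmod (b - pc e)) \<and>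
             nu f > 0"
    if hyp: "e \<in> E" "f = e \<or> f = dl e" "b \<in> f" "adj_wb E dl (pc e) b" for e f b
  proof -
    have bV: "b \<in> V \<union> Vp" using hyp inV inVp by blast
    have "\<not> adj_wb E dl b (pc e)" using notwhite[OF bV] unfolding adj_wb_def by blast
    then show ?thesis using hyp(4) ewb[OF hyp(1-3)] nupos hyp(1,2) unfolding dbar_def by auto
  qed
  have two: "e = {x, y}" if hyp: "card e = 2" "x \<in> e" "y \<in> e" "x \<noteq> y" for e :: "complex set" and x y
  proof -
    obtain p q where pq: "e = {p, q}" "p \<noteq> q" using hyp(1) card_2_iff by metis
    then show ?thesis using hyp(2-4) by auto
  qed
  have other: "\<exists>a. e = {x, a}" if hyp: "card e = 2" "x \<in> e" for e :: "complex set" and x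
  proof -
    obtain p q where pq: "e = {p, q}" "p \<noteq> q" using hyp(1) card_2_iff by metis
    then show ?thesis using hyp(2) by auto
  qed
  have cons: False if hyp: "e \<in> E" "e' \<in> E" "b \<in> e" "b \<in> dl e'" for e e' b
    using inV[OF hyp(1,3)] inVp[OF hyp(2,4)] disj by blast
  have geo: "Re ((bV - pc e) * cnj (bP - pc e)) = 0" if hyp: "e \<in> E" "bV \<in> e" "bP \<in> dl e" for e bV bP
  proof -
    obtain a where a: "e = {bV, a}" using other[of e bV] E2 hyp by blast
    obtain c where c: "dl e = {bP, c}" using other[of "dl e" bP] D2 hyp by blast
    have pr: "Re ((a - bV) * cnj (c - bP)) = 0" using perp hyp(1) a c by blast
    have "pc e \<in> closed_segment bV a" using pch(1)[OF hyp(1)] a by (simp add: segment_convex_hull)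
    then obtain u where u: "pc e = (1 - u) *\<^sub>R bV + u *\<^sub>R a" by (auto simp: in_segment)
    have "pc e \<in> closed_segment bP c" using pch(3)[OF hyp(1)] c by (simp add: segment_convex_hull)
    then obtain v where v: "pc e = (1 - v) *\<^sub>R bP + v *\<^sub>R c" by (auto simp: in_segment)
    have 1: "bV - pc e = - (of_real u * (a - bV))" unfolding u by (simp add: scaleR_conv_of_real algebra_simps)
    have 2: "bP - pc e = - (of_real v * (c - bP))" unfolding v by (simp add: scaleR_conv_of_real algebra_simps)
    have "Re ((bV - pc e) * cnj (bP - pc e)) = u * v * Re ((a - bV) * cnj (c - bP))"
      unfolding 1 2 by (simp add: algebra_simps)
    then show ?thesis using pr by simp
  qed
  have segdisj: "closed_segment bV (pc e') \<inter> closed_segment (pc e) bP = {}"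
    if hyp: "e \<in> E" "e' \<in> E" "e \<noteq> e'" "bV \<in> e'" "bP \<in> dl e" for e e' bV bP
  proof -
    have s1: "closed_segment bV (pc e') \<subseteq> convex hull e'"
      by (rule closed_segment_subset) (use inh[OF hyp(4)] pch(1)[OF hyp(2)] in auto)
    have s2: "closed_segment (pc e) bP \<subseteq> convex hull (dl e)"
      by (rule closed_segment_subset) (use inh[OF hyp(5)] pch(3)[OF hyp(1)] in auto)
    show ?thesis
    proof (rule ccontr)
      assume "closed_segment bV (pc e') \<inter> closed_segment (pc e) bP \<noteq> {}"
      then obtain X where X: "X \<in> convex hull e'" "X \<in> convex hull (dl e)" using s1 s2 by blast
      then have "X \<in> convex hull (dl e) \<inter> drawing V E" using hdraw[OF hyp(2)] by blast
      then have "X = pc e" using pch(5)[OF hyp(1)] by blast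
      then have "pc e \<in> convex hull e'" using X by simp
      then show False using L1[OF hyp(1,2)] hyp(3) by simp
    qed
  qed
  obtain e1 where e1: "e1 \<in> E" "w1 = pc e1" using white assms(3) by blast
  obtain e2 where e2: "e2 \<in> E" "w2 = pc e2" using white assms(4) by blast
  have e12: "e1 \<noteq> e2" using assms(7) e1 e2 by blast
  have ad: "adj_wb E dl (pc e1) b1" "adj_wb E dl (pc e2) b1" "adj_wb E dl (pc e2) b2" "adj_wb E dl (pc e1) b2"
    using assms(9-12) e1(2) e2(2) by simp_all
  have b1c: "(b1 \<in> e1 \<and> b1 \<in> e2) \<or> (b1 \<in> dl e1 \<and> b1 \<in> dl e2)"
    using adjE[OF e1(1) ad(1)] adjE[OF e2(1) ad(2)] cons e1(1) e2(1) by metis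
  have b2c: "(b2 \<in> e1 \<and> b2 \<in> e2) \<or> (b2 \<in> dl e1 \<and> b2 \<in> dl e2)"
    using adjE[OF e1(1) ad(4)] adjE[OF e2(1) ad(3)] cons e1(1) e2(1) by metis
  have ne: "w1 \<noteq> b1" "w1 \<noteq> b2" "w2 \<noteq> b1" "w2 \<noteq> b2"
    using b1c b2c pch(2,4)[OF e1(1)] pch(2,4)[OF e2(1)] e1(2) e2(2) by auto
  consider "b1 \<in> e1" "b1 \<in> e2" "b2 \<in> e1" "b2 \<in> e2"
    | "b1 \<in> dl e1" "b1 \<in> dl e2" "b2 \<in> dl e1" "b2 \<in> dl e2"
    | "b1 \<in> e1" "b1 \<in> e2" "b2 \<in> dl e1" "b2 \<in> dl e2"
    | "b1 \<in> dl e1" "b1 \<in> dl e2" "b2 \<in> e1" "b2 \<in> e2"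
    using b1c b2c by blast
  then show ?thesis
  proof cases
    case 1
    have "e1 = {b1, b2}" using two[OF _ 1(1,3) assms(8)] E2 e1(1) by blast
    moreover have "e2 = {b1, b2}" using two[OF _ 1(2,4) assms(8)] E2 e2(1) by blast
    ultimately show ?thesis using e12 by simp
  next
    case 2
    have "dl e1 = {b1, b2}" using two[OF _ 2(1,3) assms(8)] D2 e1(1) by blast
    moreover have "dl e2 = {b1, b2}" using two[OF _ 2(2,4) assms(8)] D2 e2(1) by blast
    ultimately have "e1 = e2" using injdl e1(1) e2(1) by (metis inj_onD)
    then show ?thesis using e12 by simp
  next
    case 3
    have R: "Im ((b1 - w1) * (b2 - w2) / ((b1 - w2) * (b2 - w1))) = 0 \<and>
         Re ((b1 - w1) * (b2 - w2) / ((b1 - w2) * (b2 - w1))) < 0"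
      apply (rule geo_main[OF assms(8,7) ne])
      using geo[OF e1(1) 3(1,3)] geo[OF e2(1) 3(2,4)] segdisj[OF e1(1) e2(1) e12 3(2) 3(3)]
        segdisj[OF e2(1) e1(1) e12[symmetric] 3(1) 3(4)] e1(2) e2(2) by simp_all
    have d: "dbar E dl nu w1 b1 = of_real (nu e1) * (b1 - w1) / of_real (cmod (b1 - w1))"
      "dbar E dl nu b1 w2 = of_real (nu e2) * (b1 - w2) / of_real (cmod (b1 - w2))"
      "dbar E dl nu w2 b2 = of_real (nu (dl e2)) * (b2 - w2) / of_real (cmod (b2 - w2))"
      "dbar E dl nu b2 w1 = of_real (nu (dl e1)) * (b2 - w1) / of_real (cmod (b2 - w1))"
      "nu e1 > 0" "nu e2 > 0" "nu (dl e2) > 0" "nu (dl e1) > 0"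
      using dbv[OF e1(1) _ 3(1) ad(1)] dbv[OF e2(1) _ 3(2) ad(2)] dbv[OF e2(1) _ 3(4) ad(3)]
        dbv[OF e1(1) _ 3(3) ad(4)] e1(2) e2(2) by auto
    show ?thesis unfolding d(1-4)
      by (rule final_alg[OF d(5-8)]) (use ne R in auto)
  next
    case 4
    have R': "Im ((b2 - w1) * (b1 - w2) / ((b2 - w2) * (b1 - w1))) = 0 \<and>
         Re ((b2 - w1) * (b1 - w2) / ((b2 - w2) * (b1 - w1))) < 0"
      apply (rule geo_main)
      using assms(7,8) ne geo[OF e1(1) 4(3,1)] geo[OF e2(1) 4(4,2)] segdisj[OF e1(1) e2(1) e12 4(4) 4(1)]
        segdisj[OF e2(1) e1(1) e12[symmetric] 4(3) 4(2)] e1(2) e2(2) by auto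
    have R: "Im ((b1 - w1) * (b2 - w2) / ((b1 - w2) * (b2 - w1))) = 0 \<and>
         Re ((b1 - w1) * (b2 - w2) / ((b1 - w2) * (b2 - w1))) < 0"
      by (rule inv_conv[OF R'])
    have d: "dbar E dl nu w1 b1 = of_real (nu (dl e1)) * (b1 - w1) / of_real (cmod (b1 - w1))"
      "dbar E dl nu b1 w2 = of_real (nu (dl e2)) * (b1 - w2) / of_real (cmod (b1 - w2))"
      "dbar E dl nu w2 b2 = of_real (nu e2) * (b2 - w2) / of_real (cmod (b2 - w2))"
      "dbar E dl nu b2 w1 = of_real (nu e1) * (b2 - w1) / of_real (cmod (b2 - w1))"
      "nu (dl e1) > 0" "nu (dl e2) > 0" "nu e2 > 0" "nu e1 > 0"
      using dbv[OF e1(1) _ 4(1) ad(1)] dbv[OF e2(1) _ 4(2) ad(2)] dbv[OF e2(1) _ 4(4) ad(3)]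
        dbv[OF e1(1) _ 4(3) ad(4)] e1(2) e2(2) by auto
    show ?thesis unfolding d(1-4)
      by (rule final_alg[OF d(5-8)]) (use ne R in auto)
  qed
qed


end
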